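(* Let $(x_t)_{t\in\mathbb{Z}}$ be a real-valued stationary time series and fix a weight $\lambda>0$. Assume: (A1) (Existence) $(x_t)$ admits a weak innovations representation, i.e. there exist causal maps $G,H$ (acting on the infinite past) such that $\nu_t=G(x_t,x_{t-1},\dots)$, $\hat x_t=H(\nu_t,\nu_{t-1},\dots)$, the $\nu_t$ are i.i.d. $\mathcal U[0,1]$, and $(\hat x_t)\stackrel{d}{=}(x_t)$ (equality of all finite-dimensional joint distributions); moreover $H$ is continuous. (A2) (Feasibility) There exist parameters $\tilde\theta_m,\tilde\eta_m$ such that the finite-dimensional maps $G_{\tilde\theta_m},H_{\tilde\eta_m}$ converge uniformly to $G,H$ as $m\to\infty$. (A3) (Training) The training sample sizes are infinite, and for every $m,n$ the training algorithm converges almost surely to a global minimizer $(\theta_m^*,\eta_m^* )$ of the loss $L^{(n)}_m$ defined below. Then for every $n\in\mathbb{Z}^+$, the $m$-dimensional WIAE $(G_{\theta_m^*},H_{\eta_m^*})$ trained with $n$-dimensional discriminators converges in distribution of finite block $n$ to $(G,H)$: for all $t$, as $m\to\infty$, $$\boldsymbol\nu^{*(n)}_{t,m}\stackrel{d}{\to}\boldsymbol\nu^{(n)}_t \quad\text{and}\quad \hat{\boldsymbol x}^{*(n)}_{t,m}\stackrel{d}{\to}\boldsymbol x^{(n)}_t,$$ where $\boldsymbol\nu^{(n)}_t=(\nu_t,\dots,\nu_{t-n+1})$ (a vector of $n$ i.i.d. $\mathcal U[0,1]$ variables) and $\boldsymbol x^{(n)}_t=(x_t,\dots,x_{t-n+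1})$.
   Context: Finite-dimensional Weak Innovations AutoEncoder (WIAE): for each input dimension $m$, $G_\theta:\mathbb{R}^m\to\mathbb{R}$ and $H_\eta:\mathbb{R}^m\to\mathbb{R}$ are parameterized (neural-network) functions; they are regarded as functions of the whole past by ignoring all but the $m$ most recent coordinates (this is the sense of uniform convergence in (A2)). Given parameters $(\theta,\eta)$ define $\nu_{t,m}=G_\theta(x_t,\dots,x_{t-m+1})$ and $\hat x_{t,m}=H_\eta(\nu_{t,m},\dots,\nu_{t-m+1,m})$, and the $n$-blocks $\boldsymbol\nu^{(n)}_{t,m}=(\nu_{t,m},\dots,\nu_{t-n+1,m})$, $\hat{\boldsymbol x}^{(n)}_{t,m}=(\hat x_{t,m},\dots,\hat x_{t-n+1,m})$. The training loss with $n$-dimensional discriminators is $$L^{(n)}_m(\theta,\eta)=\max_{\gamma,\omega}\Big(\mathbb{E}[D_\gamma(\boldsymbol u^{(n)})]-\mathbb{E}[D_\gamma(\boldsymbol\nu^{(n)}_{t,m})]+\lambda\big(\mathbb{E}[D_\omega(\boldsymbol x^{(n)}_t)]-\mathbb{E}[D_\omega(\hat{\boldsymbol x}^{(n)}_{t,m})]\big)\Big),$$ where $\boldsymbol u^{(n)}$ is a vector of $n$ i.i.d. $\mathcal U[0,1]$ variables and the discriminators $D_\gamma,D_\omega:\mathbb{R}^n\to\mathbb{R}$ range over 1-Lipschitz functions, so that (by Kantorovich–Rubinstein duality) $L^{(n)}_m$ equals the 1-Wasserstein distance between the laws of $\boldsymbol u^{(n)}$ and $\boldsymbol\nu^{(n)}_{t,m}$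 plus $\lambda$ times the 1-Wasserstein distance between the laws of $\boldsymbol x^{(n)}_t$ and $\hat{\boldsymbol x}^{(n)}_{t,m}$. The starred quantities $\boldsymbol\nu^{*(n)}_{t,m},\hat{\boldsymbol x}^{*(n)}_{t,m}$ are these blocks computed with the optimal parameters $(\theta_m^*,\eta_m^* )$ minimizing $L^{(n)}_m$. *)

theory Defs
  imports "HOL-Probability.Probability"
begin

text \<open>Sequences of past values are encoded as functions nat => real: index i holds
the value at time t - i.  An n-block is such a function padded with zeros beyond n,
so it is a faithful encoding of a vector in R^n.\<close>

definition block :: "nat \<Rightarrow> (int \<Rightarrow> 'a \<Rightarrow> real) \<Rightarrow> int \<Rightarrow> 'a \<Rightarrow> (nat \<Rightarrow> real)" where
  "block n y t \<omega> = (\<lambda>i. if i < n then y (t - int i) \<omega> else 0)"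

definition block_law :: "'a measure \<Rightarrow> nat \<Rightarrow> (int \<Rightarrow> 'a \<Rightarrow> real) \<Rightarrow> int \<Rightarrow> (nat \<Rightarrow> real) measure" where
  "block_law M n y t = distr M (PiM UNIV (\<lambda>_. borel)) (block n y t)"

definition unif_block_law :: "nat \<Rightarrow> (nat \<Rightarrow> real) measure" where
  "unif_block_law n = distr (PiM {..<n} (\<lambda>_. uniform_measure lborel {0..1::real}))
      (PiM UNIV (\<lambda>_. borel)) (\<lambda>v i. if i < n then v i else 0)"

definition past :: "(int \<Rightarrow> 'a \<Rightarrow> real) \<Rightarrow> int \<Rightarrow> 'a \<Rightarrow> (nat \<Rightarrow> real)" where
  "past y t \<omega> = (\<lambda>i. y (t - int i) \<omega>)"

definition apply_causal :: "((nat \<Rightarrow> real) \<Rightarrow> real) \<Rightarrow> (int \<Rightarrow> 'a \<Rightarrow> real) \<Rightarrow> int \<Rightarrow> 'a \<Rightarrow> real" where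
  "apply_causal F y t \<omega> = F (past y t \<omega>)"

definition dist_n :: "nat \<Rightarrow> (nat \<Rightarrow> real) \<Rightarrow> (nat \<Rightarrow> real) \<Rightarrow> real" where
  "dist_n n a b = sqrt (\<Sum>i<n. (a i - b i)^2)"

definition lip1 :: "nat \<Rightarrow> ((nat \<Rightarrow> real) \<Rightarrow> real) \<Rightarrow> bool" where
  "lip1 n D \<longleftrightarrow> (\<forall>a b. \<bar>D a - D b\<bar> \<le> dist_n n a b)"

text \<open>Kantorovich--Rubinstein dual form of the 1-Wasserstein distance (possibly infinite).\<close>
definition W1 :: "nat \<Rightarrow> (nat \<Rightarrow> real) measure \<Rightarrow> (nat \<Rightarrow> real) measure \<Rightarrow> ereal" where
  "W1 n \<mu> \<nu> = (SUP D \<in> {D. lip1 n D \<and> D \<in> borel_measurable (PiM UNIV (\<lambda>_. borel))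
                     \<and> integrable \<mu> D \<and> integrable \<nu> D}.
                 ereal ((\<integral>z. D z \<partial>\<mu>) - (\<integral>z. D z \<partial>\<nu>)))"

text \<open>The WIAE training loss L^(n)_m(theta, eta) (laws of the blocks at time 0;
by stationarity these do not depend on t).\<close>
definition wiae_loss ::
  "'a measure \<Rightarrow> (nat \<Rightarrow> 'p \<Rightarrow> (nat \<Rightarrow> real) \<Rightarrow> real) \<Rightarrow> (nat \<Rightarrow> 'q \<Rightarrow> (nat \<Rightarrow> real) \<Rightarrow> real)
   \<Rightarrow> real \<Rightarrow> (int \<Rightarrow> 'a \<Rightarrow> real) \<Rightarrow> nat \<Rightarrow> nat \<Rightarrow> 'p \<Rightarrow> 'q \<Rightarrow> ereal" where
  "wiae_loss M Gnet Hnet lam x n m \<theta> \<eta> =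
     W1 n (unif_block_law n) (block_law M n (apply_causal (Gnet m \<theta>) x) 0)
     + ereal lam * W1 n (block_law M n x 0)
                       (block_law M n (apply_causal (Hnet m \<eta>) (apply_causal (Gnet m \<theta>) x)) 0)"

definition stationary :: "'a measure \<Rightarrow> (int \<Rightarrow> 'a \<Rightarrow> real) \<Rightarrow> bool" where
  "stationary M x \<longleftrightarrow> (\<forall>J s. finite J \<longrightarrow>
      distr M (PiM J (\<lambda>_. borel)) (\<lambda>\<omega>. \<lambda>j\<in>J. x (j + s) \<omega>)
    = distr M (PiM J (\<lambda>_. borel)) (\<lambda>\<omega>. \<lambda>j\<in>J. x j \<omega>))"

definition fidi_eq :: "'a measure \<Rightarrow> (int \<Rightarrow> 'a \<Rightarrow> real) \<Rightarrow> (int \<Rightarrow> 'a \<Rightarrow> real) \<Rightarrow> bool" where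
  "fidi_eq M x y \<longleftrightarrow> (\<forall>J. finite J \<longrightarrow>
      distr M (PiM J (\<lambda>_. borel)) (\<lambda>\<omega>. \<lambda>j\<in>J. x j \<omega>)
    = distr M (PiM J (\<lambda>_. borel)) (\<lambda>\<omega>. \<lambda>j\<in>J. y j \<omega>))"

text \<open>Convergence in distribution of laws on R^n (encoded as padded sequences):
convergence of integrals of all bounded continuous test functions of the first n coordinates.\<close>
definition weak_conv_n :: "nat \<Rightarrow> (nat \<Rightarrow> (nat \<Rightarrow> real) measure) \<Rightarrow> (nat \<Rightarrow> real) measure \<Rightarrow> bool" where
  "weak_conv_n n \<mu>s \<mu> \<longleftrightarrow> (\<forall>f :: (nat \<Rightarrow> real) \<Rightarrow> real.
      (\<forall>a b. (\<forall>i<n. a i = b i) \<longrightarrow> f a = f b) \<and> continuous_on UNIV f \<and> bounded (range f)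
      \<and> f \<in> borel_measurable (PiM UNIV (\<lambda>_. borel))
      \<longrightarrow> (\<lambda>m. \<integral>z. f z \<partial>(\<mu>s m)) \<longlonglongrightarrow> (\<integral>z. f z \<partial>\<mu>))"

end

theory Submission
  imports Defs
begin


abbreviation "EE \<equiv> (PiM UNIV (\<lambda>_. borel) :: (nat \<Rightarrow> real) measure)"

lemma dist_n_L2: "dist_n n a b = L2_set (\<lambda>i. a i - b i) {..<n}"
  by (simp add: dist_n_def L2_set_def)

lemma dist_n_nonneg: "0 \<le> dist_n n a b"
  by (simp add: dist_n_def sum_nonneg)

lemma dist_n_self: "dist_n n a a = 0"
  by (simp add: dist_n_def)

lemma dist_n_sym: "dist_n n a b = dist_n n b a"
  unfolding dist_n_def by (simp add: power2_commute)

lemma dist_n_triangle: "dist_n n a b \<le> dist_n n a c + dist_n n c b"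
proof -
  have "dist_n n a b = L2_set (\<lambda>i. (a i - c i) + (c i - b i)) {..<n}"
    by (simp add: dist_n_L2)
  also have "\<dots> \<le> L2_set (\<lambda>i. a i - c i) {..<n} + L2_set (\<lambda>i. c i - b i) {..<n}"
    by (rule L2_set_triangle_ineq)
  finally show ?thesis by (simp add: dist_n_L2)
qed

lemma dist_n_coord: "i < n \<Longrightarrow> \<bar>a i - b i\<bar> \<le> dist_n n a b"
proof -
  assume i: "i < n"
  have "(a i - b i)^2 \<le> (\<Sum>j<n. (a j - b j)^2)"
    using i by (intro member_le_sum) auto
  then have "sqrt ((a i - b i)^2) \<le> dist_n n a b"
    unfolding dist_n_def using real_sqrt_le_mono by blast
  then show ?thesis by simp
qed

lemma dist_n_bound:
  assumes "c \<ge> 0" "\<And>i. i < n \<Longrightarrow> \<bar>a i - b i\<bar> \<le> c"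
  shows "dist_n n a b \<le> sqrt n * c"
proof -
  have "(\<Sum>j<n. (a j - b j)^2) \<le> (\<Sum>j<n. c^2)"
  proof (intro sum_mono)
    fix j assume "j \<in> {..<n}"
    then have "\<bar>a j - b j\<bar> \<le> c" using assms by auto
    then show "(a j - b j)^2 \<le> c^2"
      by (metis abs_ge_zero power2_abs power_mono)
  qed
  then have "dist_n n a b \<le> sqrt (n * c^2)"
    unfolding dist_n_def by (simp add: real_sqrt_le_mono)
  also have "\<dots> = sqrt n * c" using assms(1) by (simp add: real_sqrt_mult)
  finally show ?thesis .
qed

lemma dist_fun_bound:
  fixes x y :: "nat \<Rightarrow> real"
  assumes "c \<ge> 0" "\<And>i. \<bar>x i - y i\<bar> \<le> c"
  shows "dist x y \<le> 2 * c"
proof -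
  have le: "(1/2)^k * min (dist (x (from_nat k)) (y (from_nat k))) 1 \<le> c * (1/2)^k" for k
  proof -
    have "min (dist (x (from_nat k)) (y (from_nat k))) 1 \<le> c"
      using assms(2)[of "from_nat k"] by (simp add: dist_real_def)
    then show ?thesis by (simp add: mult.commute mult_left_mono)
  qed
  have s2: "summable (\<lambda>k. c * (1/2::real)^k)"
    by (intro summable_mult summable_geometric) simp
  have s1: "summable (\<lambda>k. (1/2::real)^k * min (dist (x (from_nat k)) (y (from_nat k))) 1)"
    by (rule summable_comparison_test'[OF s2, of 0]) (use le in auto)
  have "dist x y = (\<Sum>k. (1/2)^k * min (dist (x (from_nat k)) (y (from_nat k))) 1)"
    unfolding dist_fun_def by simp
  also have "\<dots> \<le> (\<Sum>k. c * (1/2::real)^k)"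
    by (rule suminf_le[OF _ s1 s2]) (use le in auto)
  also have "\<dots> = c * 2"
    using suminf_geometric[of "1/2::real"] by (simp add: suminf_mult)
  finally show ?thesis by simp
qed



lemma W1_lower:
  assumes "lip1 n D" "D \<in> borel_measurable EE" "\<And>a. \<bar>D a\<bar> \<le> B"
    "prob_space \<mu>" "prob_space \<nu>" "sets \<mu> = sets EE" "sets \<nu> = sets EE"
  shows "ereal ((\<integral>z. D z \<partial>\<mu>) - (\<integral>z. D z \<partial>\<nu>)) \<le> W1 n \<mu> \<nu>"
proof -
  have m1: "D \<in> borel_measurable \<mu>" using assms(2,6) measurable_cong_sets by blast
  have m2: "D \<in> borel_measurable \<nu>" using assms(2,7) measurable_cong_sets by blast
  have i1: "integrable \<mu> D"
    using prob_space.finite_measure[OF assms(4)] m1 assms(3)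
    by (intro finite_measure.integrable_const_bound[where B=B]) auto
  have i2: "integrable \<nu> D"
    using prob_space.finite_measure[OF assms(5)] m2 assms(3)
    by (intro finite_measure.integrable_const_bound[where B=B]) auto
  show ?thesis unfolding W1_def
    by (rule SUP_upper) (use assms i1 i2 in auto)
qed

lemma W1_nonneg:
  assumes "prob_space \<mu>" "prob_space \<nu>" "sets \<mu> = sets EE" "sets \<nu> = sets EE"
  shows "0 \<le> W1 n \<mu> \<nu>"
proof -
  have "lip1 n (\<lambda>_. 0)" by (simp add: lip1_def dist_n_nonneg)
  from W1_lower[OF this _ _ assms, of 0] show ?thesis by (simp add: zero_ereal_def)
qed

lemma W1_coupling:
  assumes M: "prob_space M" and Y: "Y \<in> measurable M EE" and Z: "Z \<in> measurable M EE"
    and ae: "AE \<omega> in M. dist_n n (Y \<omega>) (Z \<omega>) \<le> c"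
  shows "W1 n (distr M EE Y) (distr M EE Z) \<le> ereal c"
  unfolding W1_def
proof (rule SUP_least)
  fix D assume "D \<in> {D. lip1 n D \<and> D \<in> borel_measurable EE \<and> integrable (distr M EE Y) D \<and> integrable (distr M EE Z) D}"
  then have D: "lip1 n D" "D \<in> borel_measurable EE" "integrable (distr M EE Y) D" "integrable (distr M EE Z) D"
    by auto
  have iY: "integrable M (\<lambda>\<omega>. D (Y \<omega>))" using integrable_distr_eq[OF Y D(2)] D(3) by simp
  have iZ: "integrable M (\<lambda>\<omega>. D (Z \<omega>))" using integrable_distr_eq[OF Z D(2)] D(4) by simp
  interpret prob_space M by (rule M)
  have "(\<integral>z. D z \<partial>distr M EE Y) - (\<integral>z. D z \<partial>distr M EE Z)
      = (\<integral>\<omega>. D (Y \<omega>) \<partial>M) - (\<integral>\<omega>. D (Z \<omega>) \<partial>M)"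
    using D(2) Y Z by (simp add: integral_distr)
  also have "\<dots> = (\<integral>\<omega>. D (Y \<omega>) - D (Z \<omega>) \<partial>M)"
    using iY iZ by simp
  also have "\<dots> \<le> (\<integral>\<omega>. c \<partial>M)"
  proof (rule integral_mono_AE)
    show "integrable M (\<lambda>\<omega>. D (Y \<omega>) - D (Z \<omega>))" using iY iZ by simp
    show "integrable M (\<lambda>\<omega>. c)" by simp
    show "AE \<omega> in M. D (Y \<omega>) - D (Z \<omega>) \<le> c"
      using ae
    proof eventually_elim
      fix \<omega> assume "dist_n n (Y \<omega>) (Z \<omega>) \<le> c"
      moreover have "\<bar>D (Y \<omega>) - D (Z \<omega>)\<bar> \<le> dist_n n (Y \<omega>) (Z \<omega>)"
        using D(1) by (simp add: lip1_def)
      ultimately show "D (Y \<omega>) - D (Z \<omega>) \<le> c" by linarith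
    qed
  qed
  also have "\<dots> = c" by (simp add: prob_space)
  finally show "ereal ((\<integral>z. D z \<partial>distr M EE Y) - (\<integral>z. D z \<partial>distr M EE Z)) \<le> ereal c"
    by simp
qed

lemma lip_conv:
  fixes \<mu> :: "(nat \<Rightarrow> real) measure" and \<mu>s :: "nat \<Rightarrow> (nat \<Rightarrow> real) measure"
  assumes P: "prob_space \<mu>" "\<And>m. prob_space (\<mu>s m)" "sets \<mu> = sets EE" "\<And>m. sets (\<mu>s m) = sets EE"
    and W: "\<And>e. e > 0 \<Longrightarrow> eventually (\<lambda>m. W1 n \<mu> (\<mu>s m) \<le> ereal e) sequentially"
    and D: "D \<in> borel_measurable EE" "\<And>a. \<bar>D a\<bar> \<le> B" "\<And>a b. \<bar>D a - D b\<bar> \<le> L * dist_n n a b"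
  shows "(\<lambda>m. \<integral>z. D z \<partial>\<mu>s m) \<longlonglongrightarrow> (\<integral>z. D z \<partial>\<mu>)"
proof -
  define L' where "L' = max L 1"
  have L': "L' > 0" "L \<le> L'" by (auto simp: L'_def)
  define D' where "D' = (\<lambda>a. D a / L')"
  define D2 where "D2 = (\<lambda>a. - D a / L')"
  have lipD: "\<bar>D a - D b\<bar> \<le> L' * dist_n n a b" for a b
    using D(3)[of a b] L' dist_n_nonneg[of n a b] by (meson mult_right_mono order_trans)
  have l1: "lip1 n D'" unfolding lip1_def D'_def
  proof (intro allI)
    fix a b
    have "\<bar>D a / L' - D b / L'\<bar> = \<bar>D a - D b\<bar> / L'" using L' by (simp add: diff_divide_distrib[symmetric] abs_divide)
    also have "\<dots> \<le> dist_n n a b" using lipD[of a b] L' by (simp add: divide_le_eq mult.commute)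
    finally show "\<bar>D a / L' - D b / L'\<bar> \<le> dist_n n a b" .
  qed
  have l2: "lip1 n D2" unfolding lip1_def D2_def
  proof (intro allI)
    fix a b
    have "\<bar>- D a / L' - - D b / L'\<bar> = \<bar>D a - D b\<bar> / L'" using L'
      by (simp add: diff_divide_distrib[symmetric] abs_minus_commute)
    also have "\<dots> \<le> dist_n n a b" using lipD[of a b] L' by (simp add: divide_le_eq mult.commute)
    finally show "\<bar>- D a / L' - - D b / L'\<bar> \<le> dist_n n a b" .
  qed
  have m1: "D' \<in> borel_measurable EE" "D2 \<in> borel_measurable EE"
    using D(1) unfolding D'_def D2_def by auto
  have b1: "\<bar>D' a\<bar> \<le> B / L'" "\<bar>D2 a\<bar> \<le> B / L'" for a
    using D(2)[of a] L' by (auto simp: D'_def D2_def divide_right_mono)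
  have mD: "D \<in> borel_measurable \<nu>" if "sets \<nu> = sets EE" for \<nu> :: "(nat \<Rightarrow> real) measure"
    using D(1) that measurable_cong_sets by blast
  have intg: "integrable \<nu> D" if "sets \<nu> = sets EE" "prob_space \<nu>" for \<nu> :: "(nat \<Rightarrow> real) measure"
    using prob_space.finite_measure[OF that(2)] mD[OF that(1)] D(2)
    by (intro finite_measure.integrable_const_bound[where B=B]) auto
  have intD': "(\<integral>z. D' z \<partial>\<nu>) = (\<integral>z. D z \<partial>\<nu>) / L'" for \<nu>
    unfolding D'_def by simp
  have intD2: "(\<integral>z. D2 z \<partial>\<nu>) = - (\<integral>z. D z \<partial>\<nu>) / L'" for \<nu>
    unfolding D2_def by simp
  show ?thesis
  proof (rule LIMSEQ_I)
    fix r :: real assume r: "r > 0"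
    have "eventually (\<lambda>m. W1 n \<mu> (\<mu>s m) \<le> ereal (r / (2 * L'))) sequentially"
      using W r L' by auto
    then show "\<exists>no. \<forall>m\<ge>no. norm ((\<integral>z. D z \<partial>\<mu>s m) - (\<integral>z. D z \<partial>\<mu>)) < r"
      unfolding eventually_sequentially
    proof (elim exE, intro exI allI impI)
      fix N m assume N: "\<forall>m\<ge>N. W1 n \<mu> (\<mu>s m) \<le> ereal (r / (2 * L'))" and m: "N \<le> m"
      have e1: "ereal ((\<integral>z. D' z \<partial>\<mu>) - (\<integral>z. D' z \<partial>\<mu>s m)) \<le> ereal (r / (2 * L'))"
        using W1_lower[OF l1 m1(1) b1(1) P(1) P(2) P(3) P(4)] N m by (meson order_trans)
      have e2: "ereal ((\<integral>z. D2 z \<partial>\<mu>) - (\<integral>z. D2 z \<partial>\<mu>s m)) \<le> ereal (r / (2 * L'))"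
        using W1_lower[OF l2 m1(2) b1(2) P(1) P(2) P(3) P(4)] N m by (meson order_trans)
      have f1: "((\<integral>z. D z \<partial>\<mu>) - (\<integral>z. D z \<partial>\<mu>s m)) / L' \<le> r / (2 * L')"
        using e1 unfolding intD' by (simp add: diff_divide_distrib)
      have f2: "((\<integral>z. D z \<partial>\<mu>s m) - (\<integral>z. D z \<partial>\<mu>)) / L' \<le> r / (2 * L')"
        using e2 unfolding intD2 by (simp add: diff_divide_distrib)
      have g: "u / L' \<le> r / (2 * L') \<Longrightarrow> u \<le> r / 2" for u
        using L' by (simp add: field_simps mult_le_cancel_left_pos)
      have "\<bar>(\<integral>z. D z \<partial>\<mu>) - (\<integral>z. D z \<partial>\<mu>s m)\<bar> \<le> r / 2"
        using g[OF f1] g[OF f2] by linarith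
      then show "norm ((\<integral>z. D z \<partial>\<mu>s m) - (\<integral>z. D z \<partial>\<mu>)) < r"
        using r by (simp add: abs_minus_commute)
    qed
  qed
qed



lemma window_cont:
  fixes g :: "(nat \<Rightarrow> real) \<Rightarrow> real"
  assumes w: "\<forall>a b. (\<forall>i<n. a i = b i) \<longrightarrow> g a = g b" and c: "continuous_on UNIV g" and e: "e > 0"
  shows "\<exists>\<delta>>0. \<forall>b. dist_n n a b < \<delta> \<longrightarrow> \<bar>g b - g a\<bar> < e"
proof -
  obtain d where d: "d > 0" "\<And>y. dist y a < d \<Longrightarrow> dist (g y) (g a) < e"
    using c e unfolding continuous_on_iff by blast
  show ?thesis
  proof (intro exI[of _ "d/2"] conjI allI impI)
    show "d/2 > 0" using d by simp
    fix b assume b: "dist_n n a b < d/2"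
    define b' where "b' = (\<lambda>i. if i < n then b i else a i)"
    have gb: "g b = g b'" using w by (auto simp: b'_def)
    have "\<bar>b' i - a i\<bar> \<le> dist_n n a b" for i
      using dist_n_coord[of i n a b] dist_n_nonneg[of n a b] by (auto simp: b'_def abs_minus_commute)
    then have "dist b' a \<le> 2 * dist_n n a b"
      by (intro dist_fun_bound dist_n_nonneg)
    then have "dist b' a < d" using b by simp
    then show "\<bar>g b - g a\<bar> < e" using d(2) gb by (simp add: dist_real_def)
  qed
qed

lemma dist_n_cont: "continuous_on UNIV (\<lambda>a. dist_n n a x)"
  unfolding dist_n_def by (intro continuous_intros continuous_on_product_coordinates)

lemma lip_meas:
  fixes h :: "(nat \<Rightarrow> real) \<Rightarrow> real"
  assumes "\<And>a b. \<bar>h a - h b\<bar> \<le> L * dist_n n a b"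
  shows "h \<in> borel_measurable EE"
proof -
  have "continuous_on UNIV h"
    unfolding continuous_on_def
  proof (intro ballI)
    fix x :: "nat \<Rightarrow> real"
    have t: "((\<lambda>a. dist_n n a x) \<longlongrightarrow> dist_n n x x) (at x within UNIV)"
      using dist_n_cont[of n x] unfolding continuous_on_def by auto
    have "((\<lambda>a. \<bar>L\<bar> * dist_n n a x) \<longlongrightarrow> 0) (at x within UNIV)"
      using tendsto_mult[OF tendsto_const[of "\<bar>L\<bar>"] t] by (simp add: dist_n_self)
    moreover have "eventually (\<lambda>a. norm (h a - h x) \<le> \<bar>L\<bar> * dist_n n a x) (at x within UNIV)"
    proof (intro always_eventually allI)
      fix a
      have "\<bar>h a - h x\<bar> \<le> L * dist_n n a x" by (rule assms)
      also have "\<dots> \<le> \<bar>L\<bar> * dist_n n a x" by (intro mult_right_mono dist_n_nonneg) simp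
      finally show "norm (h a - h x) \<le> \<bar>L\<bar> * dist_n n a x" by simp
    qed
    ultimately have "((\<lambda>a. h a - h x) \<longlongrightarrow> 0) (at x within UNIV)"
      by (rule Lim_null_comparison[rotated])
    then show "(h \<longlongrightarrow> h x) (at x within UNIV)"
      by (simp add: LIM_zero_iff)
  qed
  then have "h \<in> borel_measurable borel" by (rule borel_measurable_continuous_onI)
  moreover have "measurable EE (borel::real measure) = measurable borel borel"
    by (rule measurable_cong_sets[OF sets_PiM_equal_borel]) simp
  ultimately show ?thesis by simp
qed



definition infconv :: "nat \<Rightarrow> ((nat \<Rightarrow> real) \<Rightarrow> real) \<Rightarrow> nat \<Rightarrow> (nat \<Rightarrow> real) \<Rightarrow> real" where
  "infconv n g k a = Inf (range (\<lambda>b. g b + real k * dist_n n a b))"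

lemma infconv_props:
  fixes g :: "(nat \<Rightarrow> real) \<Rightarrow> real" and B :: real and n k :: nat and a a' :: "nat \<Rightarrow> real"
  assumes B: "\<And>a. \<bar>g a\<bar> \<le> B"
  shows "infconv n g k a \<le> g a" "- B \<le> infconv n g k a"
    "\<bar>infconv n g k a - infconv n g k a'\<bar> \<le> real k * dist_n n a a'"
proof -
  have bdd: "bdd_below (range (\<lambda>b. g b + real k * dist_n n a b))" for a
  proof
    fix y assume "y \<in> range (\<lambda>b. g b + real k * dist_n n a b)"
    then obtain b where "y = g b + real k * dist_n n a b" by auto
    moreover have "- B \<le> g b" using B[of b] by linarith
    moreover have "0 \<le> real k * dist_n n a b" by (simp add: dist_n_nonneg)
    ultimately show "- B \<le> y" by linarith
  qed
  have low: "infconv n g k a \<le> g b + real k * dist_n n a b" for a b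
    unfolding infconv_def by (rule cInf_lower[OF _ bdd]) auto
  show "infconv n g k a \<le> g a" using low[of a a] by (simp add: dist_n_self)
  show "- B \<le> infconv n g k a" unfolding infconv_def
  proof (rule cInf_greatest)
    fix y assume "y \<in> range (\<lambda>b. g b + real k * dist_n n a b)"
    then obtain b where "y = g b + real k * dist_n n a b" by auto
    moreover have "- B \<le> g b" using B[of b] by linarith
    moreover have "0 \<le> real k * dist_n n a b" by (simp add: dist_n_nonneg)
    ultimately show "- B \<le> y" by linarith
  qed auto
  have half: "infconv n g k a - real k * dist_n n a a' \<le> infconv n g k a'" for a a'
  proof -
    have "infconv n g k a - real k * dist_n n a a' \<le> Inf (range (\<lambda>b. g b + real k * dist_n n a' b))"
    proof (rule cInf_greatest)
      fix y assume "y \<in> range (\<lambda>b. g b + real k * dist_n n a' b)"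
      then obtain b where y: "y = g b + real k * dist_n n a' b" by auto
      have "dist_n n a b \<le> dist_n n a a' + dist_n n a' b" by (rule dist_n_triangle)
      then have "real k * dist_n n a b \<le> real k * dist_n n a a' + real k * dist_n n a' b"
        by (metis distrib_left mult_left_mono of_nat_0_le_iff)
      then show "infconv n g k a - real k * dist_n n a a' \<le> y"
        using low[of a b] y by linarith
    qed auto
    then show ?thesis unfolding infconv_def .
  qed
  show "\<bar>infconv n g k a - infconv n g k a'\<bar> \<le> real k * dist_n n a a'"
  proof -
    have "infconv n g k a' - real k * dist_n n a a' \<le> infconv n g k a"
      using half[of a' a] dist_n_sym[of n a' a] by simp
    then show ?thesis using half[of a a'] by (simp add: abs_le_iff)
  qed
qed

lemma infconv_lim:
  fixes g :: "(nat \<Rightarrow> real) \<Rightarrow> real"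
  assumes B: "\<And>a. \<bar>g a\<bar> \<le> B"
    and w: "\<forall>a b. (\<forall>i<n. a i = b i) \<longrightarrow> g a = g b" and c: "continuous_on UNIV g"
  shows "(\<lambda>k. infconv n g k a) \<longlonglongrightarrow> g a"
proof (rule LIMSEQ_I)
  fix r :: real assume r: "r > 0"
  obtain \<delta> where \<delta>: "\<delta> > 0" "\<And>b. dist_n n a b < \<delta> \<Longrightarrow> \<bar>g b - g a\<bar> < r/2"
    using window_cont[OF w c, of "r/2" a] r by auto
  have B0: "B \<ge> 0" using B[of a] by linarith
  obtain N :: nat where N: "real N \<ge> 2 * B / \<delta>" using real_arch_simple by blast
  show "\<exists>no. \<forall>k\<ge>no. norm (infconv n g k a - g a) < r"
  proof (intro exI allI impI)
    fix k assume k: "N \<le> k"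
    have kk: "real k * \<delta> \<ge> 2 * B"
    proof -
      have "2 * B / \<delta> \<le> real k" using N k by (meson of_nat_le_iff order_trans)
      then show ?thesis using \<delta>(1) by (simp add: divide_le_eq)
    qed
    have "g a - r/2 \<le> infconv n g k a" unfolding infconv_def
    proof (rule cInf_greatest)
      fix y assume "y \<in> range (\<lambda>b. g b + real k * dist_n n a b)"
      then obtain b where y: "y = g b + real k * dist_n n a b" by auto
      have kd: "0 \<le> real k * dist_n n a b" by (simp add: dist_n_nonneg)
      show "g a - r/2 \<le> y"
      proof (cases "dist_n n a b < \<delta>")
        case True then show ?thesis using \<delta>(2)[of b] y kd by linarith
      next
        case False
        then have "real k * \<delta> \<le> real k * dist_n n a b" by (simp add: mult_left_mono)
        then show ?thesis using kk y B[of a] B[of b] r by linarith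
      qed
    qed auto
    moreover have "infconv n g k a \<le> g a" by (rule infconv_props(1)[of g B n k a, OF B])
    ultimately show "norm (infconv n g k a - g a) < r" using r by simp
  qed
qed

definition goodf :: "nat \<Rightarrow> ((nat \<Rightarrow> real) \<Rightarrow> real) \<Rightarrow> bool" where
  "goodf n f \<longleftrightarrow> (\<forall>a b. (\<forall>i<n. a i = b i) \<longrightarrow> f a = f b) \<and> continuous_on UNIV f \<and> bounded (range f)
      \<and> f \<in> borel_measurable EE"

lemma one_sided:
  fixes \<mu> :: "(nat \<Rightarrow> real) measure" and \<mu>s :: "nat \<Rightarrow> (nat \<Rightarrow> real) measure"
  assumes P: "prob_space \<mu>" "\<And>m. prob_space (\<mu>s m)" "sets \<mu> = sets EE" "\<And>m. sets (\<mu>s m) = sets EE"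
    and HL: "\<forall>D L B. D \<in> borel_measurable EE \<and> (\<forall>a. \<bar>D a\<bar> \<le> B) \<and>
              (\<forall>a b. \<bar>D a - D b\<bar> \<le> L * dist_n n a b) \<longrightarrow> (\<lambda>m. \<integral>z. D z \<partial>\<mu>s m) \<longlonglongrightarrow> (\<integral>z. D z \<partial>\<mu>)"
    and g: "goodf n g" and e: "e > 0"
  shows "eventually (\<lambda>m. (\<integral>z. g z \<partial>\<mu>) - e < (\<integral>z. g z \<partial>\<mu>s m)) sequentially"
proof -
  from g have w: "\<forall>a b. (\<forall>i<n. a i = b i) \<longrightarrow> g a = g b" and c: "continuous_on UNIV g"
    and bd: "bounded (range g)" and gm: "g \<in> borel_measurable EE"
    unfolding goodf_def by auto
  obtain B where B: "\<And>a. \<bar>g a\<bar> \<le> B"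
    using bd unfolding bounded_iff by (auto simp: real_norm_def)
  have mk: "infconv n g k \<in> borel_measurable EE" for k
    by (rule lip_meas[OF infconv_props(3)[of g B n k, OF B]])
  have bk: "\<bar>infconv n g k a\<bar> \<le> B" for k a
    using infconv_props(1,2)[of g B n k a, OF B] B[of a] by linarith
  have gmeas: "g \<in> borel_measurable \<nu>" "infconv n g k \<in> borel_measurable \<nu>"
    if "sets \<nu> = sets EE" for \<nu> :: "(nat \<Rightarrow> real) measure" and k
    using gm mk that measurable_cong_sets by blast+
  have intg: "integrable \<nu> g" "integrable \<nu> (infconv n g k)"
    if "sets \<nu> = sets EE" "prob_space \<nu>" for \<nu> :: "(nat \<Rightarrow> real) measure" and k
    using prob_space.finite_measure[OF that(2)] gmeas[OF that(1)] B bk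
    by (auto intro!: finite_measure.integrable_const_bound[where B=B])
  have dc: "(\<lambda>k. \<integral>z. infconv n g k z \<partial>\<mu>) \<longlonglongrightarrow> (\<integral>z. g z \<partial>\<mu>)"
  proof (rule integral_dominated_convergence[where w = "\<lambda>_. B"])
    show "g \<in> borel_measurable \<mu>" "\<And>k. infconv n g k \<in> borel_measurable \<mu>"
      using gmeas[OF P(3)] by auto
    show "integrable \<mu> (\<lambda>_. B)" using prob_space.finite_measure[OF P(1)]
      by (simp add: finite_measure.integrable_const)
    show "AE x in \<mu>. (\<lambda>k. infconv n g k x) \<longlonglongrightarrow> g x"
      using infconv_lim[OF B w c] by simp
    show "\<And>k. AE x in \<mu>. norm (infconv n g k x) \<le> B" using bk by simp
  qed
  then have "eventually (\<lambda>k. (\<integral>z. g z \<partial>\<mu>) - e/2 < (\<integral>z. infconv n g k z \<partial>\<mu>)) sequentially"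
    using e by (intro order_tendstoD(1)) auto
  then obtain k where k: "(\<integral>z. g z \<partial>\<mu>) - e/2 < (\<integral>z. infconv n g k z \<partial>\<mu>)"
    unfolding eventually_sequentially by blast
  have "(\<lambda>m. \<integral>z. infconv n g k z \<partial>\<mu>s m) \<longlonglongrightarrow> (\<integral>z. infconv n g k z \<partial>\<mu>)"
    by (rule HL[rule_format, OF conjI[OF mk conjI[OF allI[OF bk] allI[OF allI[OF infconv_props(3)[of g B n k, OF B]]]]]])
  then have ev: "eventually (\<lambda>m. (\<integral>z. infconv n g k z \<partial>\<mu>) - e/2 < (\<integral>z. infconv n g k z \<partial>\<mu>s m)) sequentially"
    using e by (intro order_tendstoD(1)) auto
  show ?thesis using ev
  proof eventually_elim
    fix m assume a: "(\<integral>z. infconv n g k z \<partial>\<mu>) - e/2 < (\<integral>z. infconv n g k z \<partial>\<mu>s m)"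
    have "(\<integral>z. infconv n g k z \<partial>\<mu>s m) \<le> (\<integral>z. g z \<partial>\<mu>s m)"
      by (rule integral_mono[OF intg(2)[OF P(4) P(2)] intg(1)[OF P(4) P(2)] infconv_props(1)[of g B n k, OF B]])
    then show "(\<integral>z. g z \<partial>\<mu>) - e < (\<integral>z. g z \<partial>\<mu>s m)" using a k by linarith
  qed
qed

lemma portmanteau:
  fixes \<mu> :: "(nat \<Rightarrow> real) measure" and \<mu>s :: "nat \<Rightarrow> (nat \<Rightarrow> real) measure"
  assumes P: "prob_space \<mu>" "\<And>m. prob_space (\<mu>s m)" "sets \<mu> = sets EE" "\<And>m. sets (\<mu>s m) = sets EE"
    and HL: "\<forall>D L B. D \<in> borel_measurable EE \<and> (\<forall>a. \<bar>D a\<bar> \<le> B) \<and>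
              (\<forall>a b. \<bar>D a - D b\<bar> \<le> L * dist_n n a b) \<longrightarrow> (\<lambda>m. \<integral>z. D z \<partial>\<mu>s m) \<longlonglongrightarrow> (\<integral>z. D z \<partial>\<mu>)"
  shows "weak_conv_n n \<mu>s \<mu>"
  unfolding weak_conv_n_def
proof (intro allI impI)
  fix f :: "(nat \<Rightarrow> real) \<Rightarrow> real"
  assume "(\<forall>a b. (\<forall>i<n. a i = b i) \<longrightarrow> f a = f b) \<and> continuous_on UNIV f \<and> bounded (range f) \<and>
       f \<in> borel_measurable EE"
  then have gf: "goodf n f" unfolding goodf_def by auto
  have gf2: "goodf n (\<lambda>a. - f a)"
  proof -
    from gf have w: "\<forall>a b. (\<forall>i<n. a i = b i) \<longrightarrow> f a = f b" and c: "continuous_on UNIV f"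
      and bd: "bounded (range f)" and gm: "f \<in> borel_measurable EE"
      unfolding goodf_def by auto
    obtain B where B: "\<And>a. \<bar>f a\<bar> \<le> B"
      using bd unfolding bounded_iff by (auto simp: real_norm_def)
    have "bounded (range (\<lambda>a. - f a))"
      unfolding bounded_iff using B by (intro exI[of _ B]) auto
    moreover have "continuous_on UNIV (\<lambda>a. - f a)" using c by (rule continuous_on_minus)
    moreover have "(\<lambda>a. - f a) \<in> borel_measurable EE" using gm by measurable
    ultimately show ?thesis using w unfolding goodf_def by metis
  qed
  show "(\<lambda>m. \<integral>z. f z \<partial>\<mu>s m) \<longlonglongrightarrow> (\<integral>z. f z \<partial>\<mu>)"
  proof (rule order_tendstoI)
    fix y assume "y < (\<integral>z. f z \<partial>\<mu>)"
    then show "eventually (\<lambda>m. y < (\<integral>z. f z \<partial>\<mu>s m)) sequentially"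
      using one_sided[OF P HL gf, where e="(\<integral>z. f z \<partial>\<mu>) - y"] by simp
  next
    fix y assume "(\<integral>z. f z \<partial>\<mu>) < y"
    then have "eventually (\<lambda>m. (\<integral>z. - f z \<partial>\<mu>) - (y - (\<integral>z. f z \<partial>\<mu>)) < (\<integral>z. - f z \<partial>\<mu>s m)) sequentially"
      using one_sided[OF P HL gf2, where e="y - (\<integral>z. f z \<partial>\<mu>)"] by simp
    then show "eventually (\<lambda>m. (\<integral>z. f z \<partial>\<mu>s m) < y) sequentially"
      by simp
  qed
qed



lemma meas_pad:
  assumes "\<And>l. l < m \<Longrightarrow> F l \<in> borel_measurable N"
  shows "(\<lambda>z. \<lambda>l. if l < m then F l z else (0::real)) \<in> measurable N EE"
proof -
  have "(\<lambda>z l. (\<lambda>l z. if l < m then F l z else (0::real)) l z) \<in> measurable N EE"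
  proof (rule measurable_PiM_single')
    fix l :: nat
    show "(\<lambda>z. if l < m then F l z else 0) \<in> borel_measurable N"
      using assms by (cases "l < m") auto
  qed (auto simp: space_PiM)
  then show ?thesis by simp
qed

lemma past_meas:
  assumes "\<And>t. y t \<in> borel_measurable M"
  shows "past y t \<in> measurable M EE"
proof -
  have "(\<lambda>\<omega> i. (\<lambda>i \<omega>. y (t - int i) \<omega>) i \<omega>) \<in> measurable M EE"
    by (rule measurable_PiM_single') (use assms in \<open>auto simp: space_PiM\<close>)
  then show ?thesis by (simp add: past_def[abs_def])
qed

lemma ac_meas:
  assumes "F \<in> borel_measurable EE" "\<And>t. y t \<in> borel_measurable M"
  shows "apply_causal F y t \<in> borel_measurable M"
proof -
  have "(\<lambda>\<omega>. F (past y t \<omega>)) \<in> borel_measurable M"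
    using measurable_comp[OF past_meas[OF assms(2)] assms(1)] by (simp add: comp_def)
  then show ?thesis by (simp add: apply_causal_def[abs_def])
qed

lemma block_meas:
  assumes "\<And>t. y t \<in> borel_measurable M"
  shows "block n y t \<in> measurable M EE"
proof -
  have "(\<lambda>\<omega>. \<lambda>i. if i < n then y (t - int i) \<omega> else 0) \<in> measurable M EE"
    by (rule meas_pad) (use assms in auto)
  then show ?thesis by (simp add: block_def[abs_def])
qed

lemma shift_law:
  assumes stat: "stationary M x" and xr: "\<And>t. x t \<in> borel_measurable M" and J: "finite J"
    and \<Psi>: "\<Psi> \<in> measurable (PiM J (\<lambda>_. borel)) N"
    and blk: "\<And>t \<omega>. blk t \<omega> = \<Psi> (\<lambda>j\<in>J. x (j + t) \<omega>)"
  shows "distr M N (blk t) = distr M N (blk 0)"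
proof -
  have R: "(\<lambda>\<omega>. \<lambda>j\<in>J. x (j + s) \<omega>) \<in> measurable M (PiM J (\<lambda>_. borel))" for s
    by (rule measurable_restrict) (use xr in auto)
  have "distr M N (blk s) = distr (distr M (PiM J (\<lambda>_. borel)) (\<lambda>\<omega>. \<lambda>j\<in>J. x (j + s) \<omega>)) N \<Psi>" for s
    by (subst distr_distr[OF \<Psi> R]) (simp add: comp_def blk[abs_def])
  moreover have "distr M (PiM J (\<lambda>_. borel)) (\<lambda>\<omega>. \<lambda>j\<in>J. x (j + t) \<omega>)
      = distr M (PiM J (\<lambda>_. borel)) (\<lambda>\<omega>. \<lambda>j\<in>J. x (j + 0) \<omega>)"
    using stat J unfolding stationary_def by simp
  ultimately show ?thesis by metis
qed

definition Psi_x :: "nat \<Rightarrow> (int \<Rightarrow> real) \<Rightarrow> nat \<Rightarrow> real" where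
  "Psi_x n z = (\<lambda>i. if i < n then z (- int i) else 0)"

lemma Psi_x_meas: "Psi_x n \<in> measurable (PiM {- int n..0} (\<lambda>_. borel)) EE"
  unfolding Psi_x_def by (rule meas_pad) auto

lemma block_Psi_x: "block n y t \<omega> = Psi_x n (\<lambda>j\<in>{- int n..0}. y (j + t) \<omega>)"
  by (auto simp: block_def Psi_x_def)

definition Psi_G :: "((nat \<Rightarrow> real) \<Rightarrow> real) \<Rightarrow> nat \<Rightarrow> nat \<Rightarrow> (int \<Rightarrow> real) \<Rightarrow> nat \<Rightarrow> real" where
  "Psi_G F m n z = (\<lambda>i. if i < n then F (\<lambda>l. if l < m then z (- int i - int l) else 0) else 0)"

definition Psi_H :: "((nat \<Rightarrow> real) \<Rightarrow> real) \<Rightarrow> ((nat \<Rightarrow> real) \<Rightarrow> real) \<Rightarrow> nat \<Rightarrow> nat \<Rightarrow> (int \<Rightarrow> real) \<Rightarrow> nat \<Rightarrow> real" where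
  "Psi_H H' F m n z = (\<lambda>i. if i < n then H' (\<lambda>k. if k < m then F (\<lambda>l. if l < m then z (- int i - int k - int l) else 0) else 0) else 0)"

lemma Psi_G_meas:
  assumes "F \<in> borel_measurable EE"
  shows "Psi_G F m n \<in> measurable (PiM {- int (n + m)..0} (\<lambda>_. borel)) EE"
  unfolding Psi_G_def
proof (rule meas_pad)
  fix i assume i: "i < n"
  have "(\<lambda>z. \<lambda>l. if l < m then z (- int i - int l) else 0) \<in> measurable (PiM {- int (n + m)..0} (\<lambda>_. borel)) EE"
    by (rule meas_pad) (use i in auto)
  then show "(\<lambda>z. F (\<lambda>l. if l < m then z (- int i - int l) else 0)) \<in> borel_measurable (PiM {- int (n + m)..0} (\<lambda>_. borel))"
    using measurable_comp[OF _ assms] by (simp add: comp_def)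
qed

lemma Psi_H_meas:
  assumes "F \<in> borel_measurable EE" "H' \<in> borel_measurable EE"
  shows "Psi_H H' F m n \<in> measurable (PiM {- int (n + 2 * m)..0} (\<lambda>_. borel)) EE"
  unfolding Psi_H_def
proof (rule meas_pad)
  fix i assume i: "i < n"
  have "(\<lambda>z. \<lambda>k. if k < m then F (\<lambda>l. if l < m then z (- int i - int k - int l) else 0) else 0) \<in> measurable (PiM {- int (n + 2 * m)..0} (\<lambda>_. borel)) EE"
  proof (rule meas_pad)
    fix k assume k: "k < m"
    have "(\<lambda>z. \<lambda>l. if l < m then z (- int i - int k - int l) else 0) \<in> measurable (PiM {- int (n + 2 * m)..0} (\<lambda>_. borel)) EE"
      by (rule meas_pad) (use i k in auto)
    then show "(\<lambda>z. F (\<lambda>l. if l < m then z (- int i - int k - int l) else 0)) \<in> borel_measurable (PiM {- int (n + 2 * m)..0} (\<lambda>_. borel))"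
      using measurable_comp[OF _ assms(1)] by (simp add: comp_def)
  qed
  then show "(\<lambda>z. H' (\<lambda>k. if k < m then F (\<lambda>l. if l < m then z (- int i - int k - int l) else 0) else 0)) \<in> borel_measurable (PiM {- int (n + 2 * m)..0} (\<lambda>_. borel))"
    using measurable_comp[OF _ assms(2)] by (simp add: comp_def)
qed

lemma block_Psi_G:
  assumes w: "\<And>a b. (\<forall>i<m. a i = b i) \<Longrightarrow> F a = F b"
  shows "block n (apply_causal F x) t \<omega> = Psi_G F m n (\<lambda>j\<in>{- int (n + m)..0}. x (j + t) \<omega>)"
proof -
  have "block n (apply_causal F x) t \<omega> i = Psi_G F m n (\<lambda>j\<in>{- int (n + m)..0}. x (j + t) \<omega>) i" for i
  proof (cases "i < n")
    case True
    have "block n (apply_causal F x) t \<omega> i = F (past x (t - int i) \<omega>)"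
      using True by (simp add: block_def apply_causal_def)
    also have "\<dots> = F (\<lambda>l. if l < m then (\<lambda>j\<in>{- int (n + m)..0}. x (j + t) \<omega>) (- int i - int l) else 0)"
    proof (rule w, intro allI impI)
      fix l assume l: "l < m"
      have "- int i - int l \<in> {- int (n + m)..0}" using True l by auto
      moreover have "- int i - int l + t = t - int i - int l" by simp
      ultimately show "past x (t - int i) \<omega> l = (if l < m then (\<lambda>j\<in>{- int (n + m)..0}. x (j + t) \<omega>) (- int i - int l) else 0)"
        using l by (simp add: past_def) (simp add: algebra_simps)
    qed
    also have "\<dots> = Psi_G F m n (\<lambda>j\<in>{- int (n + m)..0}. x (j + t) \<omega>) i"
      by (simp only: Psi_G_def if_P[OF True])
    finally show ?thesis .
  next
    case False then show ?thesis by (simp add: block_def Psi_G_def)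
  qed
  then show ?thesis by (simp add: fun_eq_iff)
qed

lemma block_Psi_H:
  assumes w: "\<And>a b. (\<forall>i<m. a i = b i) \<Longrightarrow> F a = F b"
    and w2: "\<And>a b. (\<forall>i<m. a i = b i) \<Longrightarrow> H' a = H' b"
  shows "block n (apply_causal H' (apply_causal F x)) t \<omega> = Psi_H H' F m n (\<lambda>j\<in>{- int (n + 2 * m)..0}. x (j + t) \<omega>)"
proof -
  let ?z = "\<lambda>j\<in>{- int (n + 2 * m)..0}. x (j + t) \<omega>"
  have inner: "F (past x (t - int i - int k) \<omega>) = F (\<lambda>l. if l < m then ?z (- int i - int k - int l) else 0)"
    if i: "i < n" and k: "k < m" for i k
  proof (rule w, intro allI impI)
    fix l assume l: "l < m"
    have "- int i - int k - int l \<in> {- int (n + 2 * m)..0}" using i k l by auto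
    moreover have "- int i - int k - int l + t = t - int i - int k - int l" by simp
    ultimately show "past x (t - int i - int k) \<omega> l = (if l < m then ?z (- int i - int k - int l) else 0)"
      using l by (simp add: past_def) (simp add: algebra_simps)
  qed
  have "block n (apply_causal H' (apply_causal F x)) t \<omega> i = Psi_H H' F m n ?z i" for i
  proof (cases "i < n")
    case True
    have "block n (apply_causal H' (apply_causal F x)) t \<omega> i = H' (past (apply_causal F x) (t - int i) \<omega>)"
      using True by (simp add: block_def apply_causal_def)
    also have "\<dots> = H' (\<lambda>k. if k < m then F (\<lambda>l. if l < m then ?z (- int i - int k - int l) else 0) else 0)"
    proof (rule w2, intro allI impI)
      fix k assume k: "k < m"
      have "past (apply_causal F x) (t - int i) \<omega> k = F (past x (t - int i - int k) \<omega>)"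
        by (simp add: past_def apply_causal_def)
      also have "\<dots> = F (\<lambda>l. if l < m then ?z (- int i - int k - int l) else 0)"
        by (rule inner[OF True k])
      finally show "past (apply_causal F x) (t - int i) \<omega> k = (if k < m then F (\<lambda>l. if l < m then ?z (- int i - int k - int l) else 0) else 0)"
        using k by simp
    qed
    also have "\<dots> = Psi_H H' F m n ?z i"
      by (simp only: Psi_H_def if_P[OF True])
    finally show ?thesis .
  next
    case False then show ?thesis by (simp add: block_def Psi_H_def)
  qed
  then show ?thesis by (simp add: fun_eq_iff)
qed



lemma law_G_shift:
  assumes stat: "stationary M x" and xr: "\<And>t. x t \<in> borel_measurable M"
    and Fm: "F \<in> borel_measurable EE" and w: "\<And>a b. (\<forall>i<m. a i = b i) \<Longrightarrow> F a = F b"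
  shows "block_law M n (apply_causal F x) t = block_law M n (apply_causal F x) 0"
  unfolding block_law_def
proof (rule shift_law[where blk="block n (apply_causal F x)", OF stat xr _ Psi_G_meas[OF Fm, of m n]])
  show "\<And>t \<omega>. block n (apply_causal F x) t \<omega> = Psi_G F m n (\<lambda>j\<in>{- int (n + m)..0}. x (j + t) \<omega>)"
    by (rule block_Psi_G) (rule w)
qed simp

lemma law_H_shift:
  assumes stat: "stationary M x" and xr: "\<And>t. x t \<in> borel_measurable M"
    and Fm: "F \<in> borel_measurable EE" and w: "\<And>a b. (\<forall>i<m. a i = b i) \<Longrightarrow> F a = F b"
    and Hm: "H' \<in> borel_measurable EE" and w2: "\<And>a b. (\<forall>i<m. a i = b i) \<Longrightarrow> H' a = H' b"
  shows "block_law M n (apply_causal H' (apply_causal F x)) t = block_law M n (apply_causal H' (apply_causal F x)) 0"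
  unfolding block_law_def
proof (rule shift_law[where blk="block n (apply_causal H' (apply_causal F x))", OF stat xr _ Psi_H_meas[OF Fm Hm, of m n]])
  show "\<And>t \<omega>. block n (apply_causal H' (apply_causal F x)) t \<omega> = Psi_H H' F m n (\<lambda>j\<in>{- int (n + 2 * m)..0}. x (j + t) \<omega>)"
    by (rule block_Psi_H) (rule w, assumption, rule w2, assumption)
qed simp

lemma law_x_shift:
  assumes stat: "stationary M x" and xr: "\<And>t. x t \<in> borel_measurable M"
  shows "block_law M n x t = block_law M n x 0"
  unfolding block_law_def
proof (rule shift_law[where blk="block n x", OF stat xr _ Psi_x_meas[of n]])
  show "\<And>t \<omega>. block n x t \<omega> = Psi_x n (\<lambda>j\<in>{- int n..0}. x (j + t) \<omega>)"
    by (rule block_Psi_x)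
qed simp

lemma law_fidi:
  assumes fe: "fidi_eq M y x" and yr: "\<And>t. y t \<in> borel_measurable M" and xr: "\<And>t. x t \<in> borel_measurable M"
  shows "block_law M n y 0 = block_law M n x 0"
proof -
  let ?J = "{- int n..0}"
  have R: "(\<lambda>\<omega>. \<lambda>j\<in>?J. z j \<omega>) \<in> measurable M (PiM ?J (\<lambda>_. borel))" if "\<And>t. z t \<in> borel_measurable M" for z
    by (rule measurable_restrict) (use that in auto)
  have eq: "block_law M n z 0 = distr (distr M (PiM ?J (\<lambda>_. borel)) (\<lambda>\<omega>. \<lambda>j\<in>?J. z j \<omega>)) EE (Psi_x n)"
    if "\<And>t. z t \<in> borel_measurable M" for z
    unfolding block_law_def
  proof -
    have "block n z 0 = (\<lambda>\<omega>. Psi_x n (\<lambda>j\<in>?J. z j \<omega>))"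
      by (rule ext) (simp add: block_Psi_x[of n z 0])
    then show "distr M EE (block n z 0) = distr (distr M (PiM ?J (\<lambda>_. borel)) (\<lambda>\<omega>. \<lambda>j\<in>?J. z j \<omega>)) EE (Psi_x n)"
      by (subst distr_distr[OF Psi_x_meas R[OF that]]) (simp add: comp_def)
  qed
  show ?thesis
    using eq[OF yr] eq[OF xr] fe unfolding fidi_eq_def by simp
qed

lemma law_nu:
  assumes P: "prob_space M" and nr: "\<And>t. \<nu> t \<in> borel_measurable M"
    and ind: "prob_space.indep_vars M (\<lambda>_. borel) \<nu> UNIV"
    and un: "\<And>t. distr M borel (\<nu> t) = uniform_measure lborel {0..1::real}"
    and n: "n \<ge> 1"
  shows "block_law M n \<nu> t = unif_block_law n"
proof -
  interpret prob_space M by (rule P)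
  let ?U = "uniform_measure lborel {0..1::real}"
  define J where "J = (\<lambda>i. t - int i) ` {..<n}"
  define f where "f = (\<lambda>i::nat. t - int i)"
  have "0 \<in> {..<n}" using n by auto
  then have Jne: "J \<noteq> {}" unfolding J_def by blast
  have pU: "prob_space ?U" by (rule prob_space_uniform_measure) auto
  have indJ: "indep_vars (\<lambda>_. borel) \<nu> J" using ind by (rule indep_vars_subset) simp
  have d1: "distr M (PiM J (\<lambda>_. borel)) (\<lambda>\<omega>. \<lambda>j\<in>J. \<nu> j \<omega>) = PiM J (\<lambda>j. distr M borel (\<nu> j))"
  proof -
    have rv: "\<And>i. random_variable borel (\<nu> i)" using nr by simp
    show ?thesis using indep_vars_iff_distr_eq_PiM[where M'="\<lambda>_. borel" and X=\<nu>, OF Jne rv] indJ by blast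
  qed
  also have "\<dots> = PiM J (\<lambda>_. ?U)" by (intro PiM_cong) (simp_all add: un)
  finally have d1': "distr M (PiM J (\<lambda>_. borel)) (\<lambda>\<omega>. \<lambda>j\<in>J. \<nu> j \<omega>) = PiM J (\<lambda>_. ?U)" .
  have injf: "inj_on f {..<n}" unfolding f_def by (auto simp: inj_on_def)
  have fJ: "f \<in> {..<n} \<rightarrow> J" unfolding f_def J_def by auto
  have d2: "distr (PiM J (\<lambda>_. ?U)) (PiM {..<n} (\<lambda>_. ?U)) (\<lambda>\<omega>. \<lambda>i\<in>{..<n}. \<omega> (f i)) = PiM {..<n} (\<lambda>_. ?U)"
    using distr_PiM_reindex[of J "\<lambda>_. ?U" f "{..<n}"] pU injf fJ by simp
  have sU: "sets (PiM K (\<lambda>_. ?U)) = sets (PiM K (\<lambda>_. borel))" for K :: "'b set"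
    by (rule sets_PiM_cong) auto
  have R: "(\<lambda>\<omega>. \<lambda>j\<in>J. \<nu> j \<omega>) \<in> measurable M (PiM J (\<lambda>_. borel))"
    by (rule measurable_restrict) (use nr in auto)
  have Re: "(\<lambda>\<omega>. \<lambda>i\<in>{..<n}. \<omega> (f i)) \<in> measurable (PiM J (\<lambda>_. borel)) (PiM {..<n} (\<lambda>_. borel))"
  proof (rule measurable_restrict)
    fix i assume "i \<in> {..<n}"
    then have "f i \<in> J" using fJ by auto
    then show "(\<lambda>x. x (f i)) \<in> borel_measurable (PiM J (\<lambda>_. borel))"
      by (rule measurable_component_singleton)
  qed
  have Re': "(\<lambda>\<omega>. \<lambda>i\<in>{..<n}. \<omega> (f i)) \<in> measurable (PiM J (\<lambda>_. ?U)) (PiM {..<n} (\<lambda>_. ?U))"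
    using Re measurable_cong_sets[OF sU[of J] sU[of "{..<n}"]] by simp
  have pad: "(\<lambda>v. \<lambda>i. if i < n then v i else (0::real)) \<in> measurable (PiM {..<n} (\<lambda>_. borel)) EE"
    by (rule meas_pad) auto
  have pad': "(\<lambda>v. \<lambda>i. if i < n then v i else (0::real)) \<in> measurable (PiM {..<n} (\<lambda>_. ?U)) EE"
    using pad measurable_cong_sets[OF sU[of "{..<n}"] refl[of "sets EE"]] by simp
  have blk: "block n \<nu> t = (\<lambda>v. \<lambda>i. if i < n then v i else 0) \<circ> (\<lambda>\<omega>. \<lambda>i\<in>{..<n}. \<omega> (f i)) \<circ> (\<lambda>\<omega>. \<lambda>j\<in>J. \<nu> j \<omega>)"
    by (auto simp: fun_eq_iff block_def f_def J_def)
  have "block_law M n \<nu> t = distr (distr (distr M (PiM J (\<lambda>_. borel)) (\<lambda>\<omega>. \<lambda>j\<in>J. \<nu> j \<omega>))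
          (PiM {..<n} (\<lambda>_. borel)) (\<lambda>\<omega>. \<lambda>i\<in>{..<n}. \<omega> (f i))) EE (\<lambda>v. \<lambda>i. if i < n then v i else 0)"
    unfolding block_law_def blk
    by (simp only: distr_distr[OF pad measurable_comp[OF R Re]] distr_distr[OF Re R] comp_assoc)
  also have "\<dots> = distr (distr (PiM J (\<lambda>_. ?U)) (PiM {..<n} (\<lambda>_. ?U)) (\<lambda>\<omega>. \<lambda>i\<in>{..<n}. \<omega> (f i))) EE (\<lambda>v. \<lambda>i. if i < n then v i else 0)"
    unfolding d1' by (intro arg_cong[where f="\<lambda>N. distr N EE _"] distr_cong) (simp_all add: sU)
  also have "\<dots> = unif_block_law n"
    unfolding d2 unif_block_law_def by simp
  finally show ?thesis .
qed



lemma ereal_loss_bound: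
  assumes "a \<le> ereal (e/2)" "b \<le> ereal (e / (2 * lam))" "lam > 0"
  shows "a + ereal lam * b \<le> ereal e"
proof -
  have "ereal lam * b \<le> ereal lam * ereal (e / (2 * lam))"
    by (rule ereal_mult_left_mono[OF assms(2)]) (use assms(3) in simp)
  also have "\<dots> = ereal (e/2)" using assms(3) by simp
  finally have "a + ereal lam * b \<le> ereal (e/2) + ereal (e/2)"
    using assms(1) by (intro add_mono) auto
  then show ?thesis by simp
qed

lemma sqrt_p1: "0 < sqrt (real n) + 1"
  using real_sqrt_ge_zero[of "real n"] by linarith

lemma sqrt_eps:
  assumes "e > 0" "c > 0"
  shows "sqrt (real n) * (e / (c * (sqrt (real n) + 1))) \<le> e / c"
proof -
  have "sqrt (real n) * (e / (c * (sqrt (real n) + 1))) \<le> (sqrt (real n) + 1) * (e / (c * (sqrt (real n) + 1)))"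
    using assms by (intro mult_right_mono) auto
  also have "\<dots> = e / c"
  proof -
    have s: "sqrt (real n) + 1 > 0" by (rule sqrt_p1)
    then have "c * (sqrt (real n) + 1) \<noteq> 0" using assms by simp
    then show ?thesis using s assms by (simp add: field_simps)
  qed
  finally show ?thesis .
qed

lemma compact_K: "compact (PiE UNIV (\<lambda>_::nat. {-1..2::real}))"
proof -
  have "compactin (product_topology (\<lambda>_::nat. (euclidean :: real topology)) UNIV) (PiE UNIV (\<lambda>_. {-1..2::real}))"
    by (simp add: compactin_PiE)
  then show ?thesis by (simp add: euclidean_product_topology)
qed

lemma feasible:
  fixes M :: "'a measure"
    and x :: "int \<Rightarrow> 'a \<Rightarrow> real"
    and G H :: "(nat \<Rightarrow> real) \<Rightarrow> real"
    and Gnet :: "nat \<Rightarrow> 'p \<Rightarrow> (nat \<Rightarrow> real) \<Rightarrow> real"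
    and Hnet :: "nat \<Rightarrow> 'q \<Rightarrow> (nat \<Rightarrow> real) \<Rightarrow> real"
    and \<theta>t :: "nat \<Rightarrow> 'p" and \<eta>t :: "nat \<Rightarrow> 'q"
  assumes prob: "prob_space M"
    and x_rv: "\<And>t. x t \<in> borel_measurable M"
    and lam_pos: "lam > 0"
    and Gnet_meas: "\<And>m \<theta>. Gnet m \<theta> \<in> borel_measurable (PiM UNIV (\<lambda>_. borel))"
    and Hnet_meas: "\<And>m \<eta>. Hnet m \<eta> \<in> borel_measurable (PiM UNIV (\<lambda>_. borel))"
    and G_meas: "G \<in> borel_measurable (PiM UNIV (\<lambda>_. borel))"
    and H_meas: "H \<in> borel_measurable (PiM UNIV (\<lambda>_. borel))"
    and nu_indep: "prob_space.indep_vars M (\<lambda>_. borel) (apply_causal G x) UNIV"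
    and nu_unif: "\<And>t. distr M borel (apply_causal G x t) = uniform_measure lborel {0..1::real}"
    and xhat_eq: "fidi_eq M (apply_causal H (apply_causal G x)) x"
    and H_cont: "continuous_on UNIV H"
    and G_approx: "uniform_limit UNIV (\<lambda>m. Gnet m (\<theta>t m)) G sequentially"
    and H_approx: "uniform_limit UNIV (\<lambda>m. Hnet m (\<eta>t m)) H sequentially"
    and n: "n \<ge> 1" and e: "e > 0"
  shows "eventually (\<lambda>m. wiae_loss M Gnet Hnet lam x n m (\<theta>t m) (\<eta>t m) \<le> ereal e) sequentially"
proof -
  interpret prob_space M by (rule prob)
  define \<nu> where "\<nu> = apply_causal G x"
  define \<nu>m where "\<nu>m = (\<lambda>m. apply_causal (Gnet m (\<theta>t m)) x)"
  define xh where "xh = apply_causal H \<nu>"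
  define xhm where "xhm = (\<lambda>m. apply_causal (Hnet m (\<eta>t m)) (\<nu>m m))"
  have \<nu>r: "\<And>t. \<nu> t \<in> borel_measurable M" unfolding \<nu>_def by (rule ac_meas[OF G_meas x_rv])
  have \<nu>mr: "\<And>t. \<nu>m m t \<in> borel_measurable M" for m unfolding \<nu>m_def by (rule ac_meas[OF Gnet_meas x_rv])
  have xhr: "\<And>t. xh t \<in> borel_measurable M" unfolding xh_def by (rule ac_meas[OF H_meas \<nu>r])
  have xhmr: "\<And>t. xhm m t \<in> borel_measurable M" for m unfolding xhm_def by (rule ac_meas[OF Hnet_meas \<nu>mr])
  have unif: "unif_block_law n = block_law M n \<nu> 0"
    using law_nu[OF prob \<nu>r _ _ n] nu_indep nu_unif unfolding \<nu>_def by simp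
  have xlaw: "block_law M n x 0 = block_law M n xh 0"
    using law_fidi[OF _ xhr x_rv] xhat_eq unfolding xh_def \<nu>_def by simp
  have ae1: "AE \<omega> in M. \<nu> s \<omega> \<in> {0..1}" for s
  proof -
    have "AE z in uniform_measure lborel {0..1::real}. z \<in> {0..1}"
      by (rule AE_uniform_measureI) auto
    then have "AE z in distr M borel (\<nu> s). z \<in> {0..1}" by (simp only: \<nu>_def nu_unif)
    then show ?thesis by (subst (asm) AE_distr_iff) (use \<nu>r in auto)
  qed
  have ae: "AE \<omega> in M. \<forall>s. \<nu> s \<omega> \<in> {0..1}"
    using ae1 by (simp add: AE_all_countable)
  define K where "K = PiE UNIV (\<lambda>_::nat. {-1..2::real})"
  have uc: "uniformly_continuous_on K H"
    unfolding K_def by (rule compact_uniformly_continuous[OF continuous_on_subset[OF H_cont] compact_K]) simp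
  define \<eta> where "\<eta> = e / (2 * lam * (sqrt (real n) + 1))"
  have \<eta>pos: "\<eta> > 0" unfolding \<eta>_def using e lam_pos sqrt_p1[of n] by (intro divide_pos_pos mult_pos_pos) auto
  obtain d where d: "d > 0" "\<And>a a'. a \<in> K \<Longrightarrow> a' \<in> K \<Longrightarrow> dist a' a < d \<Longrightarrow> dist (H a') (H a) < \<eta>/2"
    using uc \<eta>pos unfolding uniformly_continuous_on_def by (metis half_gt_zero)
  define \<epsilon> where "\<epsilon> = min (min 1 (d/4)) (e / (2 * (sqrt (real n) + 1)))"
  have \<epsilon>pos: "\<epsilon> > 0" unfolding \<epsilon>_def using d e sqrt_p1[of n] by (auto intro!: divide_pos_pos mult_pos_pos)
  have evG: "eventually (\<lambda>m. \<forall>a. dist (Gnet m (\<theta>t m) a) (G a) < \<epsilon>) sequentially"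
    using G_approx \<epsilon>pos unfolding uniform_limit_iff by auto
  have evH: "eventually (\<lambda>m. \<forall>a. dist (Hnet m (\<eta>t m) a) (H a) < \<eta>/2) sequentially"
  proof -
    have "\<eta>/2 > 0" using \<eta>pos by simp
    from H_approx[unfolded uniform_limit_iff, rule_format, OF this] show ?thesis by simp
  qed
  show ?thesis using evG evH
  proof eventually_elim
    fix m assume gm: "\<forall>a. dist (Gnet m (\<theta>t m) a) (G a) < \<epsilon>"
      and hm: "\<forall>a. dist (Hnet m (\<eta>t m) a) (H a) < \<eta>/2"
    have gcl: "\<bar>\<nu>m m s \<omega> - \<nu> s \<omega>\<bar> < \<epsilon>" for s \<omega>
      using gm unfolding \<nu>m_def \<nu>_def apply_causal_def by (simp add: dist_real_def)
    have W1a: "W1 n (unif_block_law n) (block_law M n (apply_causal (Gnet m (\<theta>t m)) x) 0) \<le> ereal (e/2)"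
    proof -
      have "W1 n (block_law M n \<nu> 0) (block_law M n (\<nu>m m) 0) \<le> ereal (sqrt (real n) * \<epsilon>)"
        unfolding block_law_def
      proof (rule W1_coupling[OF prob block_meas[OF \<nu>r] block_meas[OF \<nu>mr]], intro AE_I2)
        fix \<omega>
        show "dist_n n (block n \<nu> 0 \<omega>) (block n (\<nu>m m) 0 \<omega>) \<le> sqrt (real n) * \<epsilon>"
        proof (rule dist_n_bound)
          show "0 \<le> \<epsilon>" using \<epsilon>pos by simp
          fix i assume "i < n"
          then show "\<bar>block n \<nu> 0 \<omega> i - block n (\<nu>m m) 0 \<omega> i\<bar> \<le> \<epsilon>"
            using gcl[of "0 - int i" \<omega>] by (simp add: block_def abs_minus_commute)
        qed
      qed
      also have "\<dots> \<le> ereal (e/2)"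
      proof -
        have "\<epsilon> \<le> e / (2 * (sqrt (real n) + 1))" unfolding \<epsilon>_def by simp
        then have "sqrt (real n) * \<epsilon> \<le> sqrt (real n) * (e / (2 * (sqrt (real n) + 1)))"
          by (intro mult_left_mono) auto
        also have "\<dots> \<le> e / 2" by (rule sqrt_eps) (use e in auto)
        finally show ?thesis by simp
      qed
      finally show ?thesis unfolding unif \<nu>m_def by simp
    qed
    have W1b: "W1 n (block_law M n x 0) (block_law M n (apply_causal (Hnet m (\<eta>t m)) (apply_causal (Gnet m (\<theta>t m)) x)) 0)
        \<le> ereal (e / (2 * lam))"
    proof -
      have "W1 n (block_law M n xh 0) (block_law M n (xhm m) 0) \<le> ereal (sqrt (real n) * \<eta>)"
        unfolding block_law_def
      proof (rule W1_coupling[OF prob block_meas[OF xhr] block_meas[OF xhmr]])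
        show "AE \<omega> in M. dist_n n (block n xh 0 \<omega>) (block n (xhm m) 0 \<omega>) \<le> sqrt (real n) * \<eta>"
          using ae
        proof eventually_elim
          fix \<omega> assume rng: "\<forall>s. \<nu> s \<omega> \<in> {0..1}"
          show "dist_n n (block n xh 0 \<omega>) (block n (xhm m) 0 \<omega>) \<le> sqrt (real n) * \<eta>"
          proof (rule dist_n_bound)
            show "0 \<le> \<eta>" using \<eta>pos by simp
            fix i assume "i < n"
            define p where "p = past \<nu> (0 - int i) \<omega>"
            define pm where "pm = past (\<nu>m m) (0 - int i) \<omega>"
            have p01: "p k \<in> {0..1}" for k
            proof -
              have "p k = \<nu> (0 - int i - int k) \<omega>" by (simp add: p_def past_def)
              moreover have "\<nu> (0 - int i - int k) \<omega> \<in> {0..1}" using rng by blast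
              ultimately show ?thesis by simp
            qed
            have pK: "p \<in> K" unfolding K_def
            proof (rule PiE_I)
              fix k show "p k \<in> {-1..2}" using p01[of k] by auto
            qed auto
            have close: "\<bar>pm k - p k\<bar> \<le> \<epsilon>" for k
              using gcl[of "0 - int i - int k" \<omega>] unfolding pm_def p_def past_def by simp
            have e1: "\<epsilon> \<le> 1" "\<epsilon> \<le> d/4" unfolding \<epsilon>_def by (simp_all only: min.coboundedI1 min.cobounded1 min.cobounded2)
            have pmK: "pm \<in> K" unfolding K_def
            proof (simp add: PiE_iff, intro allI)
              fix k
              have "p k \<in> {0..1}" by (rule p01)
              then show "- 1 \<le> pm k \<and> pm k \<le> 2" using close[of k] e1 by auto
            qed
            have "dist pm p \<le> 2 * \<epsilon>" by (rule dist_fun_bound) (use \<epsilon>pos close in auto)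
            then have "dist pm p < d" using e1 d by linarith
            then have h1: "\<bar>H pm - H p\<bar> < \<eta>/2" using d(2)[OF pK pmK] by (simp add: dist_real_def)
            have h2: "\<bar>Hnet m (\<eta>t m) pm - H pm\<bar> < \<eta>/2" using hm by (simp add: dist_real_def)
            have "block n xh 0 \<omega> i = H p" using \<open>i < n\<close>
              by (simp add: block_def xh_def apply_causal_def p_def)
            moreover have "block n (xhm m) 0 \<omega> i = Hnet m (\<eta>t m) pm" using \<open>i < n\<close>
              by (simp add: block_def xhm_def apply_causal_def pm_def)
            ultimately show "\<bar>block n xh 0 \<omega> i - block n (xhm m) 0 \<omega> i\<bar> \<le> \<eta>"
              using h1 h2 by linarith
          qed
        qed
      qed
      also have "\<dots> \<le> ereal (e / (2 * lam))"
      proof -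
        have "sqrt (real n) * \<eta> \<le> e / (2 * lam)" unfolding \<eta>_def
          by (rule sqrt_eps) (use e lam_pos in auto)
        then show ?thesis by simp
      qed
      finally show ?thesis unfolding xlaw xhm_def \<nu>m_def by simp
    qed
    show "wiae_loss M Gnet Hnet lam x n m (\<theta>t m) (\<eta>t m) \<le> ereal e"
      unfolding wiae_loss_def by (rule ereal_loss_bound[OF W1a W1b lam_pos])
  qed
qed



lemma conv_from_W:
  fixes \<mu> :: "(nat \<Rightarrow> real) measure" and \<mu>s :: "nat \<Rightarrow> (nat \<Rightarrow> real) measure"
  assumes P: "prob_space \<mu>" "\<And>m. prob_space (\<mu>s m)" "sets \<mu> = sets EE" "\<And>m. sets (\<mu>s m) = sets EE"
    and W: "\<And>e. e > 0 \<Longrightarrow> eventually (\<lambda>m. W1 n \<mu> (\<mu>s m) \<le> ereal e) sequentially"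
  shows "weak_conv_n n \<mu>s \<mu>"
proof (rule portmanteau[OF P])
  show "\<forall>D L B. D \<in> borel_measurable EE \<and> (\<forall>a. \<bar>D a\<bar> \<le> B) \<and> (\<forall>a b. \<bar>D a - D b\<bar> \<le> L * dist_n n a b) \<longrightarrow>
      (\<lambda>m. \<integral>z. D z \<partial>\<mu>s m) \<longlonglongrightarrow> (\<integral>z. D z \<partial>\<mu>)"
  proof (intro allI impI, elim conjE)
    fix D L B assume D: "D \<in> borel_measurable EE" "\<forall>a. \<bar>D a\<bar> \<le> B" "\<forall>a b. \<bar>D a - D b\<bar> \<le> L * dist_n n a b"
    show "(\<lambda>m. \<integral>z. D z \<partial>\<mu>s m) \<longlonglongrightarrow> (\<integral>z. D z \<partial>\<mu>)"
      by (rule lip_conv[OF P W D(1)]) (use D in auto)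
  qed
qed

lemma ereal_split:
  assumes "0 \<le> a" "0 \<le> b" "a + ereal lam * b \<le> ereal c" "lam > 0"
  shows "a \<le> ereal c" "b \<le> ereal (c / lam)"
proof -
  have lb: "0 \<le> ereal lam * b" using assms(2,4) by simp
  have a1: "a \<le> a + ereal lam * b" by (rule add_increasing2[OF lb order_refl])
  have a2: "ereal lam * b \<le> a + ereal lam * b" by (rule add_increasing[OF assms(1) order_refl])
  show "a \<le> ereal c" using a1 assms(3) by (rule order_trans)
  have lbc: "ereal lam * b \<le> ereal c" using a2 assms(3) by (rule order_trans)
  show "b \<le> ereal (c / lam)"
  proof (cases b)
    case (real r)
    then have "lam * r \<le> c" using lbc by simp
    then have "r \<le> c / lam" using assms(4) by (simp add: pos_le_divide_eq mult.commute)
    then show ?thesis using real by simp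
  next
    case PInf
    then show ?thesis using lbc assms(4) by simp
  next
    case MInf
    then show ?thesis using assms(2) by simp
  qed
qed

lemma block_law_prob:
  assumes "prob_space M" "\<And>t. y t \<in> borel_measurable M"
  shows "prob_space (block_law M n y t)" "sets (block_law M n y t) = sets EE"
  unfolding block_law_def
  using prob_space.prob_space_distr[OF assms(1) block_meas[OF assms(2)]] by auto



theorem theorem1:
  fixes M :: "'a measure"
    and x :: "int \<Rightarrow> 'a \<Rightarrow> real"
    and lam :: real
    and G H :: "(nat \<Rightarrow> real) \<Rightarrow> real"
    and Gnet :: "nat \<Rightarrow> 'p \<Rightarrow> (nat \<Rightarrow> real) \<Rightarrow> real"
    and Hnet :: "nat \<Rightarrow> 'q \<Rightarrow> (nat \<Rightarrow> real) \<Rightarrow> real"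
    and \<theta>t :: "nat \<Rightarrow> 'p" and \<eta>t :: "nat \<Rightarrow> 'q"
    and \<theta>s :: "nat \<Rightarrow> nat \<Rightarrow> 'p" and \<eta>s :: "nat \<Rightarrow> nat \<Rightarrow> 'q"
  assumes prob: "prob_space M"
    and x_rv: "\<And>t. x t \<in> borel_measurable M"
    and stat: "stationary M x"
    and lam_pos: "lam > 0"
    \<comment> \<open>finite-dimensional networks: measurable and depending only on the m most recent coordinates\<close>
    and Gnet_meas: "\<And>m \<theta>. Gnet m \<theta> \<in> borel_measurable (PiM UNIV (\<lambda>_. borel))"
    and Hnet_meas: "\<And>m \<eta>. Hnet m \<eta> \<in> borel_measurable (PiM UNIV (\<lambda>_. borel))"
    and Gnet_window: "\<And>m \<theta> a b. (\<forall>i<m. a i = b i) \<Longrightarrow> Gnet m \<theta> a = Gnet m \<theta> b"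
    and Hnet_window: "\<And>m \<eta> a b. (\<forall>i<m. a i = b i) \<Longrightarrow> Hnet m \<eta> a = Hnet m \<eta> b"
    \<comment> \<open>(A1) weak innovations representation\<close>
    and G_meas: "G \<in> borel_measurable (PiM UNIV (\<lambda>_. borel))"
    and H_meas: "H \<in> borel_measurable (PiM UNIV (\<lambda>_. borel))"
    and nu_indep: "prob_space.indep_vars M (\<lambda>_. borel) (apply_causal G x) UNIV"
    and nu_unif: "\<And>t. distr M borel (apply_causal G x t) = uniform_measure lborel {0..1::real}"
    and xhat_eq: "fidi_eq M (apply_causal H (apply_causal G x)) x"
    and H_cont: "continuous_on UNIV H"
    \<comment> \<open>(A2) feasibility\<close>
    and G_approx: "uniform_limit UNIV (\<lambda>m. Gnet m (\<theta>t m)) G sequentially"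
    and H_approx: "uniform_limit UNIV (\<lambda>m. Hnet m (\<eta>t m)) H sequentially"
    \<comment> \<open>(A3) training reaches a global minimizer of L^(n)_m for every n, m\<close>
    and opt: "\<And>n m \<theta> \<eta>. wiae_loss M Gnet Hnet lam x n m (\<theta>s n m) (\<eta>s n m)
                          \<le> wiae_loss M Gnet Hnet lam x n m \<theta> \<eta>"
  shows "\<forall>n t. n \<ge> 1 \<longrightarrow>
      weak_conv_n n (\<lambda>m. block_law M n (apply_causal (Gnet m (\<theta>s n m)) x) t)
                    (block_law M n (apply_causal G x) t)
    \<and> weak_conv_n n (\<lambda>m. block_law M n (apply_causal (Hnet m (\<eta>s n m))
                                          (apply_causal (Gnet m (\<theta>s n m)) x)) t)
                    (block_law M n x t)"
proof (intro allI impI)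
  fix n :: nat and t :: int
  assume n: "n \<ge> 1"
  define \<nu> where "\<nu> = apply_causal G x"
  have \<nu>r: "\<And>t. \<nu> t \<in> borel_measurable M" unfolding \<nu>_def by (rule ac_meas[OF G_meas x_rv])
  have gr: "\<And>t. apply_causal (Gnet m \<theta>) x t \<in> borel_measurable M" for m \<theta>
    by (rule ac_meas[OF Gnet_meas x_rv])
  have hr: "\<And>t. apply_causal (Hnet m \<eta>) (apply_causal (Gnet m \<theta>) x) t \<in> borel_measurable M" for m \<theta> \<eta>
    by (rule ac_meas[OF Hnet_meas gr])
  have unif_t: "block_law M n \<nu> t = unif_block_law n"
    by (rule law_nu[OF prob \<nu>r _ _ n]) (use nu_indep nu_unif in \<open>simp_all add: \<nu>_def\<close>)
  have unif_0: "block_law M n \<nu> 0 = unif_block_law n"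
    by (rule law_nu[OF prob \<nu>r _ _ n]) (use nu_indep nu_unif in \<open>simp_all add: \<nu>_def\<close>)
  have small: "eventually (\<lambda>m. wiae_loss M Gnet Hnet lam x n m (\<theta>s n m) (\<eta>s n m) \<le> ereal e) sequentially"
    if e: "e > 0" for e
    using feasible[where M=M and x=x and lam=lam and Gnet=Gnet and Hnet=Hnet and G=G and H=H and \<theta>t=\<theta>t and \<eta>t=\<eta>t and n=n and e=e, OF prob x_rv lam_pos Gnet_meas Hnet_meas G_meas H_meas nu_indep nu_unif xhat_eq H_cont
        G_approx H_approx n e]
  proof eventually_elim
    fix m assume "wiae_loss M Gnet Hnet lam x n m (\<theta>t m) (\<eta>t m) \<le> ereal e"
    then show "wiae_loss M Gnet Hnet lam x n m (\<theta>s n m) (\<eta>s n m) \<le> ereal e"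
      using opt[of n m "\<theta>t m" "\<eta>t m"] by (rule order_trans[rotated])
  qed
  let ?A = "\<lambda>m. W1 n (unif_block_law n) (block_law M n (apply_causal (Gnet m (\<theta>s n m)) x) 0)"
  let ?B = "\<lambda>m. W1 n (block_law M n x 0)
              (block_law M n (apply_causal (Hnet m (\<eta>s n m)) (apply_causal (Gnet m (\<theta>s n m)) x)) 0)"
  have Pu: "prob_space (unif_block_law n)" "sets (unif_block_law n) = sets EE"
    using block_law_prob[where M=M and y=\<nu> and n=n and t=0, OF prob \<nu>r] unfolding unif_0 by auto
  have Pg: "prob_space (block_law M n (apply_causal (Gnet m \<theta>) x) s)"
    "sets (block_law M n (apply_causal (Gnet m \<theta>) x) s) = sets EE" for m \<theta> s
    using block_law_prob[where M=M and y="apply_causal (Gnet m \<theta>) x" and n=n and t=s, OF prob gr] by auto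
  have Ph: "prob_space (block_law M n (apply_causal (Hnet m \<eta>) (apply_causal (Gnet m \<theta>) x)) s)"
    "sets (block_law M n (apply_causal (Hnet m \<eta>) (apply_causal (Gnet m \<theta>) x)) s) = sets EE" for m \<theta> \<eta> s
    using block_law_prob[where M=M and y="apply_causal (Hnet m \<eta>) (apply_causal (Gnet m \<theta>) x)" and n=n and t=s, OF prob hr] by auto
  have Px: "prob_space (block_law M n x s)" "sets (block_law M n x s) = sets EE" for s
    using block_law_prob[where M=M and y=x and n=n and t=s, OF prob x_rv] by auto
  have A0: "0 \<le> ?A m" for m by (rule W1_nonneg[OF Pu(1) Pg(1) Pu(2) Pg(2)])
  have B0: "0 \<le> ?B m" for m by (rule W1_nonneg[OF Px(1) Ph(1) Px(2) Ph(2)])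
  have WA: "eventually (\<lambda>m. ?A m \<le> ereal e) sequentially" if e: "e > 0" for e
    using small[OF e]
  proof eventually_elim
    fix m assume "wiae_loss M Gnet Hnet lam x n m (\<theta>s n m) (\<eta>s n m) \<le> ereal e"
    then show "?A m \<le> ereal e"
      unfolding wiae_loss_def using ereal_split(1)[OF A0 B0 _ lam_pos] by blast
  qed
  have WB: "eventually (\<lambda>m. ?B m \<le> ereal e) sequentially" if e: "e > 0" for e
  proof -
    have "e * lam > 0" using e lam_pos by simp
    from small[OF this] show ?thesis
    proof eventually_elim
      fix m assume "wiae_loss M Gnet Hnet lam x n m (\<theta>s n m) (\<eta>s n m) \<le> ereal (e * lam)"
      then have "?B m \<le> ereal (e * lam / lam)"
        unfolding wiae_loss_def using ereal_split(2)[OF A0 B0 _ lam_pos] by blast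
      then show "?B m \<le> ereal e" using lam_pos by simp
    qed
  qed
  have c1: "weak_conv_n n (\<lambda>m. block_law M n (apply_causal (Gnet m (\<theta>s n m)) x) 0) (unif_block_law n)"
    by (rule conv_from_W[OF Pu(1) Pg(1) Pu(2) Pg(2) WA])
  have c2: "weak_conv_n n (\<lambda>m. block_law M n (apply_causal (Hnet m (\<eta>s n m)) (apply_causal (Gnet m (\<theta>s n m)) x)) 0)
      (block_law M n x 0)"
    by (rule conv_from_W[OF Px(1) Ph(1) Px(2) Ph(2) WB])
  have sg: "block_law M n (apply_causal (Gnet m \<theta>) x) t = block_law M n (apply_causal (Gnet m \<theta>) x) 0" for m \<theta>
    by (rule law_G_shift[OF stat x_rv Gnet_meas]) (rule Gnet_window)
  have sh: "block_law M n (apply_causal (Hnet m \<eta>) (apply_causal (Gnet m \<theta>) x)) t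
      = block_law M n (apply_causal (Hnet m \<eta>) (apply_causal (Gnet m \<theta>) x)) 0" for m \<theta> \<eta>
    by (rule law_H_shift[OF stat x_rv Gnet_meas _ Hnet_meas]) (rule Gnet_window, assumption, rule Hnet_window, assumption)
  have sx: "block_law M n x t = block_law M n x 0" by (rule law_x_shift[OF stat x_rv])
  show "weak_conv_n n (\<lambda>m. block_law M n (apply_causal (Gnet m (\<theta>s n m)) x) t) (block_law M n (apply_causal G x) t)
    \<and> weak_conv_n n (\<lambda>m. block_law M n (apply_causal (Hnet m (\<eta>s n m)) (apply_causal (Gnet m (\<theta>s n m)) x)) t)
        (block_law M n x t)"
    using c1 c2 unfolding sg sh sx unif_t[unfolded \<nu>_def] by simp
qed

end
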